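(* Let $1 \le n_s < n$ and $m \ge 1$. Let $\{\mathbf{W}(t)\}_{t \geq 0}$ be i.i.d. random $n \times n$ row-stochastic matrices of the block form $$\mathbf{W}(t) = \begin{pmatrix} \mathbf{I}_{n_s} & \mathbf{0} \\ \mathbf{B}(t) & \mathbf{D}(t) \end{pmatrix}, \qquad \overline{\mathbf{W}} = \mathbb{E}\{\mathbf{W}(t)\} = \begin{pmatrix} \mathbf{I}_{n_s} & \mathbf{0} \\ \overline{\mathbf{B}} & \overline{\mathbf{D}} \end{pmatrix},$$ with $\|\overline{\mathbf{D}}\|_2 < 1$ and $\|\overline{\mathbf{D}}\|_2 = \mathbb{E}\{\|\mathbf{D}(t)\|_2\}$. Let $\mathbf{x}(0;s) \in \mathbb{R}^{n \times m}$ and $\mathbf{x}(t+1;s) = \mathbf{W}(t)\mathbf{x}(t;s)$. Observations are $\mathbf{y}(t_i;s) = \mathbf{x}(t_i;s) + \mathbf{n}(t_i;s)$, where the entries of $\mathbf{n}(t_i;s)$ are i.i.d. zero-mean with variance bounded by $\sigma^2$, independent of $\{\mathbf{W}(t)\}$. Given a finite set of distinct sampling times $\mathcal{T}_s$ with $t_i \geq T_o$ for all $t_i \in \mathcal{T}_s$, define $$\hat{\mathbf{x}}(\mathcal{T}_s;s) = \frac{1}{|\mathcal{T}_s|}\sum_{t_i \in \mathcal{T}_s}\mathbf{y}(t_i;s),$$ and let $\overline{\mathbf{x}}(\infty;s) = \lim_{t\to\infty}\mathbb{E}\{\mathbf{x}(t;s)\mid \mathbf{x}(0;s)\} = \overline{\mathbf{W}}^\infty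 \mathbf{x}(0;s)$, where $\overline{\mathbf{W}}^\infty = \begin{pmatrix} \mathbf{I}_{n_s} & \mathbf{0} \\ (\mathbf{I}-\overline{\mathbf{D}})^{-1}\overline{\mathbf{B}} & \mathbf{0}\end{pmatrix}$. Then, as $T_o \to \infty$: (1) the estimator is unbiased: $\mathbb{E}\{\hat{\mathbf{x}}(\mathcal{T}_s;s)\mid\mathbf{x}(0;s)\} = \overline{\mathbf{x}}(\infty;s)$; (2) the estimator is consistent: $\lim_{|\mathcal{T}_s|\to\infty}\mathbb{E}\{\|\hat{\mathbf{x}}(\mathcal{T}_s;s) - \overline{\mathbf{x}}(\infty;s)\|_F^2 \mid \mathbf{x}(0;s)\} = 0$.
   Context: This models randomized DeGroot opinion dynamics on $n$ agents discussing an issue $s$, where the first $n_s$ agents are stubborn (their rows of $\mathbf{W}(t)$ are rows of the identity), each row of $\mathbf{x}(t;s)$ is an agent's opinion vector, and $\mathbf{y}$ are noisy snapshots of opinions. $\|\cdot\|_2$ is the spectral norm and $\|\cdot\|_F$ the Frobenius norm. *)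

theory Defs
  imports "HOL-Probability.Probability"
begin

text \<open>Agents are indexed by the sum type 's + 'f: Inl = stubborn agents (n_s = CARD('s) \<ge> 1),
  Inr = non-stubborn agents (CARD('f) \<ge> 1, so n_s < n).  Opinion dimension m = CARD('m) \<ge> 1.\<close>

definition spec_norm :: "real^'n^'m \<Rightarrow> real" where
  "spec_norm A = onorm (\<lambda>x. A *v x)"

definition row_stochastic :: "real^'n^'n \<Rightarrow> bool" where
  "row_stochastic A \<longleftrightarrow> (\<forall>i j. 0 \<le> A $ i $ j) \<and> (\<forall>i. (\<Sum>j\<in>UNIV. A $ i $ j) = 1)"

definition stubborn_block :: "real^('s::finite + 'f::finite)^('s + 'f) \<Rightarrow> bool" where
  "stubborn_block A \<longleftrightarrow>
     (\<forall>i j. A $ Inl i $ Inl j = (if i = j then 1 else 0)) \<and> (\<forall>i j. A $ Inl i $ Inr j = 0)"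

definition blockB :: "real^('s::finite + 'f::finite)^('s + 'f) \<Rightarrow> real^'s^'f" where
  "blockB A = (\<chi> i j. A $ Inr i $ Inl j)"

definition blockD :: "real^('s::finite + 'f::finite)^('s + 'f) \<Rightarrow> real^'f^'f" where
  "blockD A = (\<chi> i j. A $ Inr i $ Inr j)"

definition Winf :: "real^('s::finite + 'f::finite)^('s + 'f) \<Rightarrow> real^('s + 'f)^('s + 'f)" where
  "Winf A = (\<chi> i j. case i of
      Inl a \<Rightarrow> (if j = Inl a then 1 else 0)
    | Inr b \<Rightarrow> (case j of
         Inl a \<Rightarrow> (matrix_inv (mat 1 - blockD A) ** blockB A) $ b $ a
       | Inr _ \<Rightarrow> 0))"

fun opinion :: "(nat \<Rightarrow> 'a \<Rightarrow> real^'n^'n) \<Rightarrow> real^'m^'n \<Rightarrow> nat \<Rightarrow> 'a \<Rightarrow> real^'m^'n" where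
  "opinion W X0 0 \<omega> = X0"
| "opinion W X0 (Suc t) \<omega> = W t \<omega> ** opinion W X0 t \<omega>"

definition estimator ::
  "(nat \<Rightarrow> 'a \<Rightarrow> real^'n^'n) \<Rightarrow> real^'m^'n \<Rightarrow> (nat \<Rightarrow> 'a \<Rightarrow> real^'m^'n) \<Rightarrow> nat set \<Rightarrow> 'a \<Rightarrow> real^'m^'n" where
  "estimator W X0 Nz T \<omega> = (1 / real (card T)) *\<^sub>R (\<Sum>t\<in>T. opinion W X0 t \<omega> + Nz t \<omega>)"

end

theory Submission
  imports Defs
begin



lemma meas_vec:
  fixes f :: "'a \<Rightarrow> 'b::euclidean_space^'n"
  assumes "\<And>i. (\<lambda>x. f x $ i) \<in> borel_measurable M"
  shows "f \<in> borel_measurable M"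
proof (subst borel_measurable_euclidean_space, intro ballI)
  fix b :: "'b^'n" assume "b \<in> Basis"
  then obtain i u where b: "b = axis i u" "u \<in> Basis" unfolding Basis_vec_def by auto
  have "(\<lambda>x. f x \<bullet> b) = (\<lambda>x. f x $ i \<bullet> u)" using b by (simp add: inner_axis)
  then show "(\<lambda>x. f x \<bullet> b) \<in> borel_measurable M" using assms[of i] by simp
qed

lemma meas_nth[measurable (raw)]:
  fixes f :: "'a \<Rightarrow> 'b::euclidean_space^'n"
  assumes "f \<in> borel_measurable M"
  shows "(\<lambda>x. f x $ i) \<in> borel_measurable M"
  using assms by (intro borel_measurable_continuous_on[OF _ assms]) (auto intro: linear_continuous_on bounded_linear_vec_nth)

lemma mult_meas[measurable (raw)]:
  fixes f :: "'a \<Rightarrow> real^'k^'n" and g :: "'a \<Rightarrow> real^'m^'k"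
  assumes "f \<in> borel_measurable M" "g \<in> borel_measurable M"
  shows "(\<lambda>x. f x ** g x) \<in> borel_measurable M"
  by (intro meas_vec) (simp add: matrix_matrix_mult_def, intro borel_measurable_sum borel_measurable_times meas_nth assms)

lemma int_nth:
  fixes f :: "'a \<Rightarrow> 'b::euclidean_space^'n"
  assumes "integrable M f"
  shows "integral\<^sup>L M f $ i = integral\<^sup>L M (\<lambda>x. f x $ i)"
  using integral_bounded_linear[OF bounded_linear_vec_nth assms] by simp

lemma integrable_nth:
  fixes f :: "'a \<Rightarrow> 'b::euclidean_space^'n"
  assumes "integrable M f"
  shows "integrable M (\<lambda>x. f x $ i)"
  using integrable_bounded_linear[OF bounded_linear_vec_nth assms] by simp

lemma nsq_vec: "(norm (v::real^'n))\<^sup>2 = (\<Sum>i\<in>UNIV. (v$i)\<^sup>2)"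
  unfolding power2_norm_eq_inner inner_vec_def by (simp add: power2_eq_square)

lemma nsq: "(norm (A::real^'m^'n))\<^sup>2 = (\<Sum>i\<in>UNIV. \<Sum>j\<in>UNIV. (A$i$j)\<^sup>2)"
  unfolding power2_norm_eq_inner inner_vec_def by (simp add: power2_eq_square)

lemma inner_mat: "inner (A::real^'m^'n) B = (\<Sum>i\<in>UNIV. \<Sum>j\<in>UNIV. A$i$j * B$i$j)"
  by (simp add: inner_vec_def)

lemma inner_Q: "inner (u::real^'m^'n) (Q ** v) = (\<Sum>i\<in>UNIV. \<Sum>l\<in>UNIV. Q$i$l * (\<Sum>j\<in>UNIV. u$i$j * v$l$j))"
proof -
  have "inner u (Q ** v) = (\<Sum>i\<in>UNIV. \<Sum>j\<in>UNIV. \<Sum>l\<in>UNIV. Q$i$l * (u$i$j * v$l$j))"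
    by (simp add: inner_mat matrix_matrix_mult_def sum_distrib_left mult_ac)
  also have "\<dots> = (\<Sum>i\<in>UNIV. \<Sum>l\<in>UNIV. \<Sum>j\<in>UNIV. Q$i$l * (u$i$j * v$l$j))"
    by (intro sum.cong refl sum.swap)
  finally show ?thesis by (simp add: sum_distrib_left)
qed




fun pm :: "(nat \<Rightarrow> real^'n^'n) \<Rightarrow> nat \<Rightarrow> nat \<Rightarrow> real^'n^'n" where
  "pm g a 0 = mat 1"
| "pm g a (Suc k) = g (a+k) ** pm g a k"

fun mp :: "real^'n^'n \<Rightarrow> nat \<Rightarrow> real^'n^'n" where
  "mp A 0 = mat 1"
| "mp A (Suc k) = A ** mp A k"

lemma opinion_pm: "opinion W X0 t \<omega> = pm (\<lambda>i. W i \<omega>) 0 t ** X0"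
  by (induction t) (simp_all add: matrix_mul_assoc)

lemma pm_split: "pm g 0 (t+k) = pm g t k ** pm g 0 t"
  by (induction k) (simp_all add: matrix_mul_assoc)

lemma pm_cong: "(\<And>i. a \<le> i \<Longrightarrow> i < a+k \<Longrightarrow> g i = h i) \<Longrightarrow> pm g a k = pm h a k"
  by (induction k) auto

lemma rs_mult:
  assumes "row_stochastic A" "row_stochastic B"
  shows "row_stochastic (A ** B)"
proof -
  have "(\<Sum>j\<in>UNIV. (A ** B) $ i $ j) = 1" for i
  proof -
    have "(\<Sum>j\<in>UNIV. (A ** B) $ i $ j) = (\<Sum>k\<in>UNIV. A$i$k * (\<Sum>j\<in>UNIV. B$k$j))"
      by (simp add: matrix_matrix_mult_def sum_distrib_left) (rule sum.swap)
    also have "\<dots> = 1" using assms by (simp add: row_stochastic_def)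
    finally show ?thesis .
  qed
  moreover have "0 \<le> (A ** B) $ i $ j" for i j
    using assms by (auto simp: row_stochastic_def matrix_matrix_mult_def intro!: sum_nonneg)
  ultimately show ?thesis by (simp add: row_stochastic_def)
qed

lemma rs_id: "row_stochastic (mat 1 :: real^'n^'n)"
  by (simp add: row_stochastic_def mat_def sum.delta)

lemma rs_pm: "(\<And>i. row_stochastic (g i)) \<Longrightarrow> row_stochastic (pm g a k)"
  by (induction k) (auto intro: rs_mult rs_id)

lemma rs_bound:
  assumes "row_stochastic A"
  shows "0 \<le> A$i$j" "A$i$j \<le> 1"
proof -
  show "0 \<le> A$i$j" using assms by (simp add: row_stochastic_def)
  have "A$i$j \<le> (\<Sum>j\<in>UNIV. A$i$j)"
    using assms by (intro member_le_sum) (auto simp: row_stochastic_def)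
  then show "A$i$j \<le> 1" using assms by (simp add: row_stochastic_def)
qed

lemma rs_apply_bound:
  assumes "row_stochastic A"
  shows "\<bar>(A ** X) $ i $ j\<bar> \<le> (\<Sum>k\<in>UNIV. \<bar>X$k$j\<bar>)"
proof -
  have "\<bar>(A ** X) $ i $ j\<bar> \<le> (\<Sum>k\<in>UNIV. \<bar>A$i$k * X$k$j\<bar>)"
    unfolding matrix_matrix_mult_def by simp
  also have "\<dots> \<le> (\<Sum>k\<in>UNIV. \<bar>X$k$j\<bar>)"
    using rs_bound[OF assms] by (intro sum_mono) (simp add: abs_mult mult_left_le_one_le)
  finally show ?thesis .
qed

lemma rs_norm_bound:
  fixes A :: "real^'n^'m"
  assumes "\<And>i j. \<bar>A$i$j\<bar> \<le> b"
  shows "norm A \<le> real CARD('m) * real CARD('n) * b"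
proof -
  have "norm A \<le> (\<Sum>i\<in>UNIV. norm (A$i))"
    by (simp add: norm_vec_def L2_set_le_sum)
  also have "\<dots> \<le> (\<Sum>i\<in>UNIV. (\<Sum>j\<in>UNIV. \<bar>A$i$j\<bar>))"
    by (intro sum_mono norm_le_l1_cart)
  also have "\<dots> \<le> (\<Sum>i\<in>(UNIV::'m set). (\<Sum>j\<in>(UNIV::'n set). b))"
    by (intro sum_mono assms)
  finally show ?thesis by simp
qed

lemma sb_row:
  assumes "stubborn_block A"
  shows "(A ** X) $ Inl a = X $ Inl a"
proof -
  have "A $ Inl a $ k = (if k = Inl a then 1 else 0)" for k
    using assms by (cases k) (auto simp: stubborn_block_def)
  then have "(\<Sum>k\<in>UNIV. A $ Inl a $ k * X $ k $ i) = (\<Sum>k\<in>UNIV. if k = Inl a then X $ k $ i else 0)" for i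
    by (intro sum.cong) auto
  then show ?thesis by (simp add: vec_eq_iff matrix_matrix_mult_def)
qed

lemma sb_mult: "stubborn_block A \<Longrightarrow> stubborn_block B \<Longrightarrow> stubborn_block (A ** B)"
  unfolding stubborn_block_def using sb_row[of A B]
  by (metis sb_row stubborn_block_def)

lemma sum_UNIV_Plus: "(\<Sum>k\<in>(UNIV::('s::finite + 'f::finite) set). f k) = (\<Sum>a\<in>UNIV. f (Inl a)) + (\<Sum>b\<in>UNIV. f (Inr b))"
  by (subst UNIV_Plus_UNIV[symmetric], subst sum.Plus) auto

lemma contraction:
  fixes A :: "real^('s::finite + 'f::finite)^('s + 'f)" and e :: "real^'m^('s + 'f)"
  assumes A: "stubborn_block A" and e: "\<And>a. e $ Inl a = 0"
  shows "norm (A ** e) \<le> spec_norm (blockD A) * norm e" "\<And>a. (A ** e) $ Inl a = 0"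
proof -
  show z: "\<And>a. (A ** e) $ Inl a = 0" by (simp add: sb_row[OF A] e)
  define D where "D = blockD A"
  define col where "col j = (\<chi> b. e $ Inr b $ j)" for j
  have Ar: "(A ** e) $ Inr b $ j = (D *v col j) $ b" for b j
  proof -
    have "(A ** e) $ Inr b $ j = (\<Sum>k\<in>UNIV. A $ Inr b $ k * e $ k $ j)"
      by (simp add: matrix_matrix_mult_def)
    also have "\<dots> = (\<Sum>b'\<in>UNIV. A $ Inr b $ Inr b' * e $ Inr b' $ j)"
      by (subst sum_UNIV_Plus) (simp add: e)
    finally show ?thesis by (simp add: D_def blockD_def col_def matrix_vector_mult_def)
  qed
  have rho0: "0 \<le> spec_norm D" unfolding spec_norm_def by (intro onorm_pos_le) simp
  have colsum: "(\<Sum>j\<in>UNIV. (norm (col j))\<^sup>2) = (norm e)\<^sup>2"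
  proof -
    have "(\<Sum>j\<in>UNIV. (norm (col j))\<^sup>2) = (\<Sum>j\<in>UNIV. \<Sum>b\<in>UNIV. (e$Inr b$j)\<^sup>2)"
      by (simp add: nsq_vec col_def)
    also have "\<dots> = (\<Sum>b\<in>UNIV. \<Sum>j\<in>UNIV. (e$Inr b$j)\<^sup>2)" by (rule sum.swap)
    also have "\<dots> = (norm e)\<^sup>2" unfolding nsq sum_UNIV_Plus by (simp add: e)
    finally show ?thesis .
  qed
  have "(norm (A ** e))\<^sup>2 = (\<Sum>b\<in>UNIV. \<Sum>j\<in>UNIV. ((D *v col j) $ b)\<^sup>2)"
    by (subst nsq, subst sum_UNIV_Plus) (simp add: z Ar)
  also have "\<dots> = (\<Sum>j\<in>UNIV. (norm (D *v col j))\<^sup>2)"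
    by (subst sum.swap) (simp add: nsq_vec)
  also have "\<dots> \<le> (\<Sum>j\<in>UNIV. (spec_norm D * norm (col j))\<^sup>2)"
  proof (intro sum_mono power_mono)
    fix j show "norm (D *v col j) \<le> spec_norm D * norm (col j)"
      unfolding spec_norm_def by (rule onorm) simp
  qed simp
  also have "\<dots> = (spec_norm D)\<^sup>2 * (\<Sum>j\<in>UNIV. (norm (col j))\<^sup>2)"
    by (simp add: power_mult_distrib sum_distrib_left)
  also have "\<dots> = (spec_norm D * norm e)\<^sup>2" unfolding colsum by (simp add: power_mult_distrib)
  finally have fin: "(norm (A ** e))\<^sup>2 \<le> (spec_norm D * norm e)\<^sup>2" .
  have "norm (A ** e) \<le> spec_norm D * norm e"
    by (rule power2_le_imp_le[OF fin]) (simp add: rho0)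
  then show "norm (A ** e) \<le> spec_norm (blockD A) * norm e" by (simp only: D_def)
qed

lemma contraction_mp:
  fixes A :: "real^('s::finite + 'f::finite)^('s + 'f)" and e :: "real^'m^('s + 'f)"
  assumes A: "stubborn_block A" and e: "\<And>a. e $ Inl a = 0"
  shows "norm (mp A k ** e) \<le> spec_norm (blockD A) ^ k * norm e \<and> (\<forall>a. (mp A k ** e) $ Inl a = 0)"
proof (induction k)
  case 0 then show ?case using e by simp
next
  case (Suc k)
  have rho0: "0 \<le> spec_norm (blockD A)" unfolding spec_norm_def by (intro onorm_pos_le) simp
  have eq: "mp A (Suc k) ** e = A ** (mp A k ** e)" by (simp add: matrix_mul_assoc)
  have z: "\<And>a. (mp A k ** e) $ Inl a = 0" using Suc by blast
  have c1: "norm (A ** (mp A k ** e)) \<le> spec_norm (blockD A) * norm (mp A k ** e)"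
    by (rule contraction(1)[OF A z])
  have c2: "spec_norm (blockD A) * norm (mp A k ** e) \<le> spec_norm (blockD A) * (spec_norm (blockD A) ^ k * norm e)"
    by (rule mult_left_mono) (use Suc rho0 in auto)
  have "norm (mp A (Suc k) ** e) \<le> spec_norm (blockD A) ^ Suc k * norm e"
    unfolding eq using order_trans[OF c1 c2] by (simp add: mult.assoc)
  moreover have "\<forall>a. (mp A (Suc k) ** e) $ Inl a = 0"
    unfolding eq using contraction(2)[OF A z] by blast
  ultimately show ?case by blast
qed




locale setting = prob_space M for M :: "'a measure" +
  fixes W :: "nat \<Rightarrow> 'a \<Rightarrow> real^('s::finite + 'f::finite)^('s + 'f)"
  assumes W_meas[measurable]: "\<And>t. W t \<in> borel_measurable M"
    and W_indep: "indep_vars (\<lambda>_. borel) W UNIV"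
    and W_ident: "\<And>t. distr M borel (W t) = distr M borel (W 0)"
    and W_stoch: "\<And>t \<omega>. \<omega> \<in> space M \<Longrightarrow> row_stochastic (W t \<omega>)"
    and W_block: "\<And>t \<omega>. \<omega> \<in> space M \<Longrightarrow> stubborn_block (W t \<omega>)"
begin

definition RW :: "nat set \<Rightarrow> 'a \<Rightarrow> nat \<Rightarrow> real^('s + 'f)^('s + 'f)" where
  "RW A \<omega> = restrict (\<lambda>i. W i \<omega>) A"

lemma RW_indep: "A \<inter> B = {} \<Longrightarrow> indep_var (PiM A (\<lambda>_. borel)) (RW A) (PiM B (\<lambda>_. borel)) (RW B)"
  unfolding RW_def by (rule indep_var_restrict[OF W_indep]) auto

lemma RW_meas: "RW A \<in> measurable M (PiM A (\<lambda>_. borel))"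
  unfolding RW_def by (intro measurable_restrict) simp

lemma IND:
  fixes F G :: "(nat \<Rightarrow> real^('s + 'f)^('s + 'f)) \<Rightarrow> real"
  assumes AB: "A \<inter> B = {}"
    and F: "F \<in> borel_measurable (PiM A (\<lambda>_. borel))" and G: "G \<in> borel_measurable (PiM B (\<lambda>_. borel))"
    and iF: "integrable M (\<lambda>\<omega>. F (RW A \<omega>))" and iG: "integrable M (\<lambda>\<omega>. G (RW B \<omega>))"
  shows "integral\<^sup>L M (\<lambda>\<omega>. F (RW A \<omega>) * G (RW B \<omega>)) = integral\<^sup>L M (\<lambda>\<omega>. F (RW A \<omega>)) * integral\<^sup>L M (\<lambda>\<omega>. G (RW B \<omega>))"
    "integrable M (\<lambda>\<omega>. F (RW A \<omega>) * G (RW B \<omega>))"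
proof -
  have I: "indep_var borel (F \<circ> RW A) borel (G \<circ> RW B)"
    by (rule indep_var_compose[OF RW_indep[OF AB] F G])
  show "integral\<^sup>L M (\<lambda>\<omega>. F (RW A \<omega>) * G (RW B \<omega>)) = integral\<^sup>L M (\<lambda>\<omega>. F (RW A \<omega>)) * integral\<^sup>L M (\<lambda>\<omega>. G (RW B \<omega>))"
    using indep_var_lebesgue_integral[OF I] iF iG by (simp add: comp_def)
  show "integrable M (\<lambda>\<omega>. F (RW A \<omega>) * G (RW B \<omega>))"
    using indep_var_integrable[OF I] iF iG by (simp add: comp_def)
qed

lemma pm_meas_Pi: "{a..<a+k} \<subseteq> A \<Longrightarrow> (\<lambda>g. pm g a k) \<in> borel_measurable (PiM A (\<lambda>_. borel :: (real^('s + 'f)^('s + 'f)) measure))"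
proof (induction k)
  case 0 then show ?case by simp
next
  case (Suc k)
  then have "a + k \<in> A" "{a..<a+k} \<subseteq> A" by auto
  have e: "(\<lambda>g. pm g a (Suc k)) = (\<lambda>g. g (a+k) ** pm g a k)" by simp
  show ?case unfolding e
    by (intro mult_meas measurable_component_singleton Suc.IH) (use \<open>a + k \<in> A\<close> \<open>{a..<a+k} \<subseteq> A\<close> in auto)
qed

lemma pm_meas[measurable]: "(\<lambda>\<omega>. pm (\<lambda>i. W i \<omega>) a k) \<in> borel_measurable M"
  by (induction k) (simp_all add: mult_meas)

lemma pm_RW: "{a..<a+k} \<subseteq> A \<Longrightarrow> pm (RW A \<omega>) a k = pm (\<lambda>i. W i \<omega>) a k"
  unfolding RW_def by (intro pm_cong) auto

lemma pm_rs: "\<omega> \<in> space M \<Longrightarrow> row_stochastic (pm (\<lambda>i. W i \<omega>) a k)"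
  by (intro rs_pm W_stoch)

lemma pm_sb: "\<omega> \<in> space M \<Longrightarrow> stubborn_block (pm (\<lambda>i. W i \<omega>) a k)"
proof (induction k)
  case 0 then show ?case by (auto simp: stubborn_block_def mat_def)
next
  case (Suc k) then show ?case by (simp add: sb_mult W_block)
qed

lemma int_entry_bounded:
  fixes f :: "'a \<Rightarrow> real"
  assumes "f \<in> borel_measurable M" "\<And>\<omega>. \<omega> \<in> space M \<Longrightarrow> \<bar>f \<omega>\<bar> \<le> b"
  shows "integrable M f"
  using assms by (intro integrable_const_bound[where B=b]) auto

lemma pm_entry_int: "integrable M (\<lambda>\<omega>. pm (\<lambda>i. W i \<omega>) a k $ i $ j)"
  by (rule int_entry_bounded[where b=1]) (use rs_bound[OF pm_rs] in auto)

lemma W_int: "integrable M (W t)"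
proof (rule integrable_const_bound[where B="real CARD('s+'f) * real CARD('s+'f) * 1"])
  show "AE x in M. norm (W t x) \<le> real CARD('s+'f) * real CARD('s+'f) * 1"
    using rs_bound[OF W_stoch] by (intro AE_I2 rs_norm_bound) auto
qed simp

definition Wb where "Wb = integral\<^sup>L M (W 0)"

lemma W_entry_int: "integral\<^sup>L M (\<lambda>\<omega>. W t \<omega> $ i $ j) = Wb $ i $ j"
proof -
  have "integral\<^sup>L M (\<lambda>\<omega>. W t \<omega> $ i $ j) = integral\<^sup>L (distr M borel (W t)) (\<lambda>A. A $ i $ j)"
    by (rule integral_distr[symmetric]) measurable
  also have "\<dots> = integral\<^sup>L (distr M borel (W 0)) (\<lambda>A. A $ i $ j)" by (subst W_ident[of t]) (rule refl)
  also have "\<dots> = integral\<^sup>L M (\<lambda>\<omega>. W 0 \<omega> $ i $ j)"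
    by (rule integral_distr) measurable
  also have "\<dots> = Wb $ i $ j"
  proof -
    have "Wb $ i $ j = integral\<^sup>L M (\<lambda>\<omega>. W 0 \<omega> $ i) $ j"
      unfolding Wb_def using int_nth[OF W_int, of 0 i] by simp
    also have "\<dots> = integral\<^sup>L M (\<lambda>\<omega>. W 0 \<omega> $ i $ j)"
      by (rule int_nth[OF integrable_nth[OF W_int]])
    finally show ?thesis by simp
  qed
  finally show ?thesis .
qed

lemma Wb_sb: "stubborn_block Wb"
proof -
  obtain \<omega> where \<omega>: "\<omega> \<in> space M" using not_empty by blast
  have *: "Wb $ i $ j = integral\<^sup>L M (\<lambda>\<omega>. W 0 \<omega> $ i $ j)" for i j
    using W_entry_int[of 0 i j] by simp
  have c1: "integral\<^sup>L M (\<lambda>\<omega>. W 0 \<omega> $ Inl i $ Inl j) = (if i = j then 1 else 0)" for i j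
  proof -
    have "integral\<^sup>L M (\<lambda>\<omega>. W 0 \<omega> $ Inl i $ Inl j) = integral\<^sup>L M (\<lambda>\<omega>. (if i = j then 1 else 0))"
      by (rule Bochner_Integration.integral_cong[OF refl]) (use W_block in \<open>auto simp: stubborn_block_def\<close>)
    then show ?thesis by (simp add: prob_space)
  qed
  have c2: "integral\<^sup>L M (\<lambda>\<omega>. W 0 \<omega> $ Inl i $ Inr j) = 0" for i j
  proof -
    have "integral\<^sup>L M (\<lambda>\<omega>. W 0 \<omega> $ Inl i $ Inr j) = integral\<^sup>L M (\<lambda>\<omega>. 0::real)"
      by (rule Bochner_Integration.integral_cong[OF refl]) (use W_block in \<open>auto simp: stubborn_block_def\<close>)
    then show ?thesis by simp
  qed
  show ?thesis unfolding stubborn_block_def * using c1 c2 by simp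
qed

lemma E_pm: "integral\<^sup>L M (\<lambda>\<omega>. pm (\<lambda>i. W i \<omega>) a k $ i $ j) = mp Wb k $ i $ j"
proof (induction k arbitrary: i j)
  case 0 then show ?case by (simp add: mat_def prob_space)
next
  case (Suc k)
  have disj: "{a+k} \<inter> {a..<a+k} = {}" by auto
  have "integral\<^sup>L M (\<lambda>\<omega>. pm (\<lambda>i. W i \<omega>) a (Suc k) $ i $ j)
      = (\<Sum>l\<in>UNIV. integral\<^sup>L M (\<lambda>\<omega>. W (a+k) \<omega> $ i $ l * pm (\<lambda>i. W i \<omega>) a k $ l $ j))"
  proof -
    have "integral\<^sup>L M (\<lambda>\<omega>. pm (\<lambda>i. W i \<omega>) a (Suc k) $ i $ j)
       = integral\<^sup>L M (\<lambda>\<omega>. \<Sum>l\<in>UNIV. W (a+k) \<omega> $ i $ l * pm (\<lambda>i. W i \<omega>) a k $ l $ j)"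
      by (simp add: matrix_matrix_mult_def)
    also have "\<dots> = (\<Sum>l\<in>UNIV. integral\<^sup>L M (\<lambda>\<omega>. W (a+k) \<omega> $ i $ l * pm (\<lambda>i. W i \<omega>) a k $ l $ j))"
    proof (rule Bochner_Integration.integral_sum)
      fix l
      show "integrable M (\<lambda>\<omega>. W (a+k) \<omega> $ i $ l * pm (\<lambda>i. W i \<omega>) a k $ l $ j)"
        by (rule int_entry_bounded[where b=1])
           (use rs_bound[OF pm_rs] rs_bound[OF W_stoch] in \<open>auto simp: abs_mult intro: mult_le_one\<close>)
    qed
    finally show ?thesis .
  qed
  also have "\<dots> = (\<Sum>l\<in>UNIV. Wb $ i $ l * mp Wb k $ l $ j)"
  proof (intro sum.cong refl)
    fix l
    let ?F = "\<lambda>g::nat \<Rightarrow> real^('s + 'f)^('s + 'f). g (a+k) $ i $ l"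
    let ?G = "\<lambda>g::nat \<Rightarrow> real^('s + 'f)^('s + 'f). pm g a k $ l $ j"
    have eF: "?F (RW {a+k} \<omega>) = W (a+k) \<omega> $ i $ l" for \<omega> by (simp add: RW_def)
    have eG: "?G (RW {a..<a+k} \<omega>) = pm (\<lambda>i. W i \<omega>) a k $ l $ j" for \<omega> by (simp add: pm_RW)
    have mF: "?F \<in> borel_measurable (PiM {a+k} (\<lambda>_. borel))"
      by (intro meas_nth measurable_component_singleton) auto
    have mG: "?G \<in> borel_measurable (PiM {a..<a+k} (\<lambda>_. borel))"
      by (intro meas_nth pm_meas_Pi) auto
    have iF: "integrable M (\<lambda>\<omega>. ?F (RW {a+k} \<omega>))" unfolding eF
      using W_int by (intro integrable_nth)
    have iG: "integrable M (\<lambda>\<omega>. ?G (RW {a..<a+k} \<omega>))" unfolding eG by (rule pm_entry_int)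
    show "integral\<^sup>L M (\<lambda>\<omega>. W (a+k) \<omega> $ i $ l * pm (\<lambda>i. W i \<omega>) a k $ l $ j) = Wb $ i $ l * mp Wb k $ l $ j"
      using IND(1)[OF disj mF mG iF iG] unfolding eF eG by (simp add: W_entry_int Suc)
  qed
  also have "\<dots> = mp Wb (Suc k) $ i $ j" by (simp add: matrix_matrix_mult_def)
  finally show ?case .
qed

end



lemma mm_diff_l: "(A::real^'k^'n) ** (B - C) = A ** B - A ** C"
  by (simp add: vec_eq_iff matrix_matrix_mult_def algebra_simps sum_subtractf)

lemma mm_diff_r: "((A::real^'k^'n) - B) ** C = A ** C - B ** C"
  by (simp add: vec_eq_iff matrix_matrix_mult_def algebra_simps sum_subtractf)

lemma abs_int_le:
  fixes f :: "'a \<Rightarrow> real"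
  assumes "prob_space M" "integrable M f" "\<And>\<omega>. \<omega> \<in> space M \<Longrightarrow> \<bar>f \<omega>\<bar> \<le> B"
  shows "\<bar>integral\<^sup>L M f\<bar> \<le> B"
proof -
  interpret prob_space M by fact
  have "\<bar>integral\<^sup>L M f\<bar> \<le> integral\<^sup>L M (\<lambda>x. \<bar>f x\<bar>)" by (rule integral_abs_bound)
  also have "\<dots> \<le> integral\<^sup>L M (\<lambda>_. B)"
    using assms by (intro Bochner_Integration.integral_mono) auto
  finally have "\<bar>integral\<^sup>L M f\<bar> \<le> integral\<^sup>L M (\<lambda>_. B)" .
  then show ?thesis by (simp add: prob_space)
qed

context setting begin

definition cc :: "real^'m^('s + 'f) \<Rightarrow> real^'m^('s + 'f)" where
  "cc X0 = Winf Wb ** X0"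

lemma Wb_inv:
  assumes D: "spec_norm (blockD Wb) < 1"
  shows "(mat 1 - blockD Wb) ** matrix_inv (mat 1 - blockD Wb) = mat 1"
proof -
  let ?D = "blockD Wb"
  have rho0: "0 \<le> spec_norm ?D" unfolding spec_norm_def by (intro onorm_pos_le) simp
  have "\<forall>x. (mat 1 - ?D) *v x = 0 \<longrightarrow> x = 0"
  proof (intro allI impI)
    fix x :: "real^'f" assume "(mat 1 - ?D) *v x = 0"
    then have x: "x = ?D *v x" by (simp add: matrix_vector_mult_diff_rdistrib)
    have "norm x \<le> spec_norm ?D * norm x"
      unfolding spec_norm_def by (subst (1) x) (rule onorm, simp)
    then have "norm x \<le> 0" using D
      by (metis mult_le_cancel_right1 not_le norm_ge_zero order_le_less_trans)
    then show "x = 0" by simp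
  qed
  then have "\<exists>B. B ** (mat 1 - ?D) = mat 1" by (simp add: matrix_left_invertible_ker)
  then have "invertible (mat 1 - ?D)" by (simp add: invertible_left_inverse)
  then show ?thesis unfolding invertible_def matrix_inv_def by (rule someI_ex[THEN conjunct1])
qed

lemma cc_Inl: "cc X0 $ Inl a = X0 $ Inl a"
proof -
  have "(\<Sum>k\<in>UNIV. Winf Wb $ Inl a $ k * X0 $ k $ j) = (\<Sum>k\<in>UNIV. if k = Inl a then X0 $ k $ j else 0)" for j
    by (intro sum.cong refl) (simp add: Winf_def)
  then show ?thesis by (simp add: vec_eq_iff cc_def matrix_matrix_mult_def)
qed

lemma cc_Inr: "cc X0 $ Inr b $ j = (\<Sum>a\<in>UNIV. (matrix_inv (mat 1 - blockD Wb) ** blockB Wb) $ b $ a * X0 $ Inl a $ j)"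
  by (simp add: cc_def matrix_matrix_mult_def sum_UNIV_Plus Winf_def)

lemma Wb_cc:
  assumes D: "spec_norm (blockD Wb) < 1"
  shows "Wb ** cc X0 = cc X0"
proof -
  define G where "G = matrix_inv (mat 1 - blockD Wb) ** blockB Wb"
  have "(mat 1 - blockD Wb) ** G = blockB Wb"
    unfolding G_def by (simp add: matrix_mul_assoc Wb_inv[OF D])
  then have G: "G = blockB Wb + blockD Wb ** G"
    by (simp add: mm_diff_r algebra_simps)
  have "(Wb ** cc X0) $ i $ j = cc X0 $ i $ j" for i j
  proof (cases i)
    case (Inl a) then show ?thesis by (simp add: sb_row[OF Wb_sb])
  next
    case (Inr b)
    have "(Wb ** cc X0) $ Inr b $ j = (\<Sum>a\<in>UNIV. Wb $ Inr b $ Inl a * X0 $ Inl a $ j)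
         + (\<Sum>b'\<in>UNIV. Wb $ Inr b $ Inr b' * (\<Sum>a\<in>UNIV. G $ b' $ a * X0 $ Inl a $ j))"
      by (simp add: matrix_matrix_mult_def sum_UNIV_Plus cc_Inl cc_Inr G_def)
    also have "\<dots> = (\<Sum>a\<in>UNIV. (blockB Wb $ b $ a + (blockD Wb ** G) $ b $ a) * X0 $ Inl a $ j)"
      by (simp add: blockB_def blockD_def matrix_matrix_mult_def algebra_simps sum.distrib
          sum_distrib_left sum_distrib_right mult.assoc) (rule sum.swap)
    also have "\<dots> = (\<Sum>a\<in>UNIV. G $ b $ a * X0 $ Inl a $ j)"
    proof -
      have Gc: "G $ b $ a = blockB Wb $ b $ a + (blockD Wb ** G) $ b $ a" for a
        using arg_cong[of _ _ "\<lambda>A. A $ b $ a", OF G] by simp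
      show ?thesis by (simp only: Gc[symmetric])
    qed
    also have "\<dots> = cc X0 $ Inr b $ j" by (simp add: cc_Inr G_def)
    finally show ?thesis using Inr by simp
  qed
  then show ?thesis by (simp add: vec_eq_iff)
qed

lemma mp_cc:
  assumes D: "spec_norm (blockD Wb) < 1"
  shows "mp Wb k ** cc X0 = cc X0"
  by (induction k) (simp_all add: matrix_mul_assoc[symmetric] Wb_cc[OF D])

end



lemma rs_apply_bound2:
  assumes "row_stochastic A" "\<And>k j. \<bar>X$k$j\<bar> \<le> b"
  shows "\<bar>(A ** X) $ i $ j\<bar> \<le> b"
proof -
  have "\<bar>(A ** X) $ i $ j\<bar> \<le> (\<Sum>k\<in>UNIV. \<bar>A$i$k * X$k$j\<bar>)"
    unfolding matrix_matrix_mult_def by simp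
  also have "\<dots> \<le> (\<Sum>k\<in>UNIV. A$i$k * b)"
    using rs_bound[OF assms(1)] assms(2) by (intro sum_mono) (simp add: abs_mult mult_left_mono)
  also have "\<dots> = b" using assms(1) by (simp add: row_stochastic_def sum_distrib_right[symmetric])
  finally show ?thesis .
qed

lemma X0_bound: "\<bar>(X0::real^'m^'n) $ k $ j\<bar> \<le> (\<Sum>k\<in>UNIV. \<Sum>j\<in>UNIV. \<bar>X0$k$j\<bar>)"
proof -
  have "\<bar>X0 $ k $ j\<bar> \<le> (\<Sum>j\<in>UNIV. \<bar>X0$k$j\<bar>)" by (rule member_le_sum) auto
  also have "\<dots> \<le> (\<Sum>k\<in>UNIV. \<Sum>j\<in>UNIV. \<bar>X0$k$j\<bar>)" by (rule member_le_sum) (auto intro: sum_nonneg)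
  finally show ?thesis .
qed

context setting begin

lemma Wb_rs: "row_stochastic Wb"
proof -
  have nn: "0 \<le> Wb $ i $ j" for i j
    unfolding W_entry_int[of 0, symmetric] using W_stoch
    by (intro integral_nonneg_AE AE_I2) (auto simp: row_stochastic_def)
  have "(\<Sum>j\<in>UNIV. Wb $ i $ j) = 1" for i
  proof -
    have "(\<Sum>j\<in>UNIV. Wb $ i $ j) = (\<Sum>j\<in>UNIV. integral\<^sup>L M (\<lambda>\<omega>. W 0 \<omega> $ i $ j))"
      by (simp add: W_entry_int)
    also have "\<dots> = integral\<^sup>L M (\<lambda>\<omega>. \<Sum>j\<in>UNIV. W 0 \<omega> $ i $ j)"
      by (rule Bochner_Integration.integral_sum[symmetric]) (intro integrable_nth W_int)
    also have "\<dots> = integral\<^sup>L M (\<lambda>\<omega>. 1)"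
      by (rule Bochner_Integration.integral_cong[OF refl]) (use W_stoch in \<open>auto simp: row_stochastic_def\<close>)
    finally show ?thesis by (simp add: prob_space)
  qed
  then show ?thesis using nn by (simp add: row_stochastic_def)
qed

lemma mp_rs: "row_stochastic (mp A k)" if "row_stochastic A"
  by (induction k) (auto intro: rs_mult rs_id that)

lemma int_inner:
  fixes u v :: "'a \<Rightarrow> real^'m^'n"
  assumes [measurable]: "u \<in> borel_measurable M" "v \<in> borel_measurable M"
    and bu: "\<And>\<omega> i j. \<omega> \<in> space M \<Longrightarrow> \<bar>u \<omega> $ i $ j\<bar> \<le> b1"
    and bv: "\<And>\<omega> i j. \<omega> \<in> space M \<Longrightarrow> \<bar>v \<omega> $ i $ j\<bar> \<le> b2"
  shows "integrable M (\<lambda>\<omega>. inner (u \<omega>) (v \<omega>))"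
proof (rule int_entry_bounded)
  show "(\<lambda>\<omega>. inner (u \<omega>) (v \<omega>)) \<in> borel_measurable M" by measurable
  fix \<omega> assume \<omega>: "\<omega> \<in> space M"
  have b1: "0 \<le> b1" using bu[OF \<omega>] by (meson abs_ge_zero order_trans)
  have "\<bar>inner (u \<omega>) (v \<omega>)\<bar> \<le> norm (u \<omega>) * norm (v \<omega>)" by (rule Cauchy_Schwarz_ineq2)
  also have "\<dots> \<le> (real CARD('n) * real CARD('m) * b1) * (real CARD('n) * real CARD('m) * b2)"
    by (intro mult_mono rs_norm_bound bu bv \<omega>) (use b1 in auto)
  finally show "\<bar>inner (u \<omega>) (v \<omega>)\<bar> \<le> (real CARD('n) * real CARD('m) * b1) * (real CARD('n) * real CARD('m) * b2)" .
qed

definition xx :: "real^'m^('s + 'f) \<Rightarrow> nat \<Rightarrow> 'a \<Rightarrow> real^'m^('s + 'f)" where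
  "xx X0 t \<omega> = pm (\<lambda>i. W i \<omega>) 0 t ** X0"

definition ee :: "real^'m^('s + 'f) \<Rightarrow> nat \<Rightarrow> 'a \<Rightarrow> real^'m^('s + 'f)" where
  "ee X0 t \<omega> = xx X0 t \<omega> - cc X0"

definition bX where "bX X0 = (\<Sum>k\<in>UNIV. \<Sum>j\<in>UNIV. \<bar>(X0::real^'m^('s + 'f))$k$j\<bar>)"
definition bE where "bE X0 = bX X0 + norm (cc X0)"

lemma bX_nn: "0 \<le> bX X0" unfolding bX_def by (intro sum_nonneg) auto
lemma bE_nn: "0 \<le> bE X0" unfolding bE_def using bX_nn[of X0] by simp

lemma xx_meas[measurable]: "xx X0 t \<in> borel_measurable M"
  unfolding xx_def by (intro mult_meas pm_meas) simp

lemma ee_meas[measurable]: "ee X0 t \<in> borel_measurable M"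
  unfolding ee_def by measurable

lemma xx_bound: "\<omega> \<in> space M \<Longrightarrow> \<bar>xx X0 t \<omega> $ i $ j\<bar> \<le> bX X0"
  unfolding xx_def bX_def by (intro rs_apply_bound2 pm_rs X0_bound)

lemma ee_bound: "\<omega> \<in> space M \<Longrightarrow> \<bar>ee X0 t \<omega> $ i $ j\<bar> \<le> bE X0"
proof -
  assume \<omega>: "\<omega> \<in> space M"
  have "\<bar>ee X0 t \<omega> $ i $ j\<bar> \<le> \<bar>xx X0 t \<omega> $ i $ j\<bar> + \<bar>cc X0 $ i $ j\<bar>"
    unfolding ee_def by simp
  also have "\<dots> \<le> bX X0 + norm (cc X0)"
    by (intro add_mono xx_bound \<omega> order_trans[OF component_le_norm_cart Finite_Cartesian_Product.norm_nth_le])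
  finally show ?thesis by (simp add: bE_def)
qed

lemma ee_Inl: "\<omega> \<in> space M \<Longrightarrow> ee X0 t \<omega> $ Inl a = 0"
  unfolding ee_def xx_def by (simp add: sb_row[OF pm_sb] cc_Inl)

lemma xx_step: "xx X0 (t+k) \<omega> = pm (\<lambda>i. W i \<omega>) t k ** xx X0 t \<omega>"
  unfolding xx_def pm_split by (simp add: matrix_mul_assoc)

lemma cov:
  fixes X0 :: "real^'m^('s + 'f)"
  assumes D: "spec_norm (blockD Wb) < 1"
  shows "integral\<^sup>L M (\<lambda>\<omega>. inner (ee X0 t \<omega>) (ee X0 (t+k) \<omega>))
       = integral\<^sup>L M (\<lambda>\<omega>. inner (ee X0 t \<omega>) (mp Wb k ** ee X0 t \<omega>))"
proof -
  let ?Q = "\<lambda>\<omega>. pm (\<lambda>i. W i \<omega>) t k"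
  let ?h = "\<lambda>i l \<omega>. (\<Sum>j\<in>UNIV. ee X0 t \<omega> $ i $ j * xx X0 t \<omega> $ l $ j)"
  have ih: "integrable M (?h i l)" for i l
    by (intro Bochner_Integration.integrable_sum int_entry_bounded[where b="bE X0 * bX X0"])
       (simp, simp only: abs_mult, intro mult_mono ee_bound xx_bound, auto simp: bE_nn)
  have iQh: "integrable M (\<lambda>\<omega>. ?Q \<omega> $ i $ l * ?h i l \<omega>)" for i l
  proof (intro int_entry_bounded[where b="1 * (real CARD('m) * (bE X0 * bX X0))"])
    show "(\<lambda>\<omega>. ?Q \<omega> $ i $ l * ?h i l \<omega>) \<in> borel_measurable M" by measurable
    fix \<omega> assume \<omega>: "\<omega> \<in> space M"
    have "\<bar>?h i l \<omega>\<bar> \<le> (\<Sum>j\<in>UNIV. \<bar>ee X0 t \<omega> $ i $ j * xx X0 t \<omega> $ l $ j\<bar>)" by (rule sum_abs)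
    also have "\<dots> \<le> (\<Sum>j\<in>(UNIV::'m set). bE X0 * bX X0)"
    proof (rule sum_mono)
      fix j
      show "\<bar>ee X0 t \<omega> $ i $ j * xx X0 t \<omega> $ l $ j\<bar> \<le> bE X0 * bX X0"
        unfolding abs_mult by (intro mult_mono ee_bound xx_bound \<omega>) (auto simp: bE_nn)
    qed
    finally have hb: "\<bar>?h i l \<omega>\<bar> \<le> real CARD('m) * (bE X0 * bX X0)" by simp
    show "\<bar>?Q \<omega> $ i $ l * ?h i l \<omega>\<bar> \<le> 1 * (real CARD('m) * (bE X0 * bX X0))"
      unfolding abs_mult using rs_bound[OF pm_rs[OF \<omega>]] hb by (intro mult_mono) auto
  qed
  have EQh: "integral\<^sup>L M (\<lambda>\<omega>. ?h i l \<omega> * ?Q \<omega> $ i $ l) = integral\<^sup>L M (?h i l) * mp Wb k $ i $ l" for i l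
  proof -
    let ?F = "\<lambda>g::nat \<Rightarrow> real^('s + 'f)^('s + 'f). (\<Sum>j\<in>UNIV. (pm g 0 t ** X0 - cc X0) $ i $ j * (pm g 0 t ** X0) $ l $ j)"
    let ?G = "\<lambda>g::nat \<Rightarrow> real^('s + 'f)^('s + 'f). pm g t k $ i $ l"
    have disj: "{0..<t} \<inter> {t..<t+k} = {}" by auto
    have eF: "?F (RW {0..<t} \<omega>) = ?h i l \<omega>" for \<omega>
      using pm_RW[of 0 t "{0..<t}" \<omega>] by (simp add: ee_def xx_def)
    have eG: "?G (RW {t..<t+k} \<omega>) = ?Q \<omega> $ i $ l" for \<omega> by (simp add: pm_RW)
    have mP[measurable]: "(\<lambda>g. pm g 0 t) \<in> borel_measurable (PiM {0..<t} (\<lambda>_. borel :: (real^('s + 'f)^('s + 'f)) measure))"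
      by (rule pm_meas_Pi) auto
    have mF: "?F \<in> borel_measurable (PiM {0..<t} (\<lambda>_. borel))" by measurable
    have mG: "?G \<in> borel_measurable (PiM {t..<t+k} (\<lambda>_. borel))"
      by (intro meas_nth pm_meas_Pi) auto
    have iF: "integrable M (\<lambda>\<omega>. ?F (RW {0..<t} \<omega>))" unfolding eF by (rule ih)
    have iG: "integrable M (\<lambda>\<omega>. ?G (RW {t..<t+k} \<omega>))" unfolding eG by (rule pm_entry_int)
    show ?thesis
      using IND(1)[OF disj mF mG iF iG] unfolding eF eG by (simp add: E_pm)
  qed
  have step1: "integral\<^sup>L M (\<lambda>\<omega>. inner (ee X0 t \<omega>) (?Q \<omega> ** xx X0 t \<omega>))
      = integral\<^sup>L M (\<lambda>\<omega>. inner (ee X0 t \<omega>) (mp Wb k ** xx X0 t \<omega>))"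
  proof -
    have "integral\<^sup>L M (\<lambda>\<omega>. inner (ee X0 t \<omega>) (?Q \<omega> ** xx X0 t \<omega>))
        = integral\<^sup>L M (\<lambda>\<omega>. \<Sum>i\<in>UNIV. \<Sum>l\<in>UNIV. ?Q \<omega> $ i $ l * ?h i l \<omega>)"
      by (simp only: inner_Q)
    also have "\<dots> = (\<Sum>i\<in>UNIV. \<Sum>l\<in>UNIV. integral\<^sup>L M (\<lambda>\<omega>. ?Q \<omega> $ i $ l * ?h i l \<omega>))"
      using iQh by (simp add: Bochner_Integration.integral_sum Bochner_Integration.integrable_sum)
    also have "\<dots> = (\<Sum>i\<in>UNIV. \<Sum>l\<in>UNIV. integral\<^sup>L M (?h i l) * mp Wb k $ i $ l)"
      using EQh by (simp add: mult.commute)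
    also have "\<dots> = (\<Sum>i\<in>UNIV. \<Sum>l\<in>UNIV. integral\<^sup>L M (\<lambda>\<omega>. mp Wb k $ i $ l * ?h i l \<omega>))"
      by (simp add: mult.commute)
    also have "\<dots> = integral\<^sup>L M (\<lambda>\<omega>. \<Sum>i\<in>UNIV. \<Sum>l\<in>UNIV. mp Wb k $ i $ l * ?h i l \<omega>)"
      using ih by (simp add: Bochner_Integration.integral_sum Bochner_Integration.integrable_sum)
    also have "\<dots> = integral\<^sup>L M (\<lambda>\<omega>. inner (ee X0 t \<omega>) (mp Wb k ** xx X0 t \<omega>))"
      by (simp only: inner_Q)
    finally show ?thesis .
  qed
  have bmx: "\<bar>(mp Wb k ** xx X0 t \<omega>) $ i $ j\<bar> \<le> bX X0" if "\<omega> \<in> space M" for \<omega> i j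
    by (intro rs_apply_bound2 mp_rs Wb_rs xx_bound that)
  have bQx: "\<bar>(?Q \<omega> ** xx X0 t \<omega>) $ i $ j\<bar> \<le> bX X0" if "\<omega> \<in> space M" for \<omega> i j
    by (intro rs_apply_bound2 pm_rs xx_bound that)
  have bc: "\<bar>cc X0 $ i $ j\<bar> \<le> norm (cc X0)" for i j
    by (rule order_trans[OF component_le_norm_cart Finite_Cartesian_Product.norm_nth_le])
  have i1: "integrable M (\<lambda>\<omega>. inner (ee X0 t \<omega>) (?Q \<omega> ** xx X0 t \<omega>))"
    by (rule int_inner[OF _ _ ee_bound bQx]) auto
  have i2: "integrable M (\<lambda>\<omega>. inner (ee X0 t \<omega>) (cc X0))"
    by (rule int_inner[OF _ _ ee_bound bc]) auto
  have i3: "integrable M (\<lambda>\<omega>. inner (ee X0 t \<omega>) (mp Wb k ** xx X0 t \<omega>))"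
    by (rule int_inner[OF _ _ ee_bound bmx]) auto
  have "integral\<^sup>L M (\<lambda>\<omega>. inner (ee X0 t \<omega>) (ee X0 (t+k) \<omega>))
      = integral\<^sup>L M (\<lambda>\<omega>. inner (ee X0 t \<omega>) (?Q \<omega> ** xx X0 t \<omega>) - inner (ee X0 t \<omega>) (cc X0))"
    by (simp add: ee_def[of X0 "t+k"] xx_step inner_diff_right)
  also have "\<dots> = integral\<^sup>L M (\<lambda>\<omega>. inner (ee X0 t \<omega>) (?Q \<omega> ** xx X0 t \<omega>)) - integral\<^sup>L M (\<lambda>\<omega>. inner (ee X0 t \<omega>) (cc X0))"
    using i1 i2 by (rule Bochner_Integration.integral_diff)
  also have "\<dots> = integral\<^sup>L M (\<lambda>\<omega>. inner (ee X0 t \<omega>) (mp Wb k ** xx X0 t \<omega>)) - integral\<^sup>L M (\<lambda>\<omega>. inner (ee X0 t \<omega>) (cc X0))"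
    by (simp only: step1)
  also have "\<dots> = integral\<^sup>L M (\<lambda>\<omega>. inner (ee X0 t \<omega>) (mp Wb k ** xx X0 t \<omega>) - inner (ee X0 t \<omega>) (cc X0))"
    using i3 i2 by (rule Bochner_Integration.integral_diff[symmetric])
  also have "\<dots> = integral\<^sup>L M (\<lambda>\<omega>. inner (ee X0 t \<omega>) (mp Wb k ** ee X0 t \<omega>))"
    by (simp add: ee_def[of X0 t] mm_diff_l mp_cc[OF D] inner_diff_right)
  finally show ?thesis .
qed

end



definition dd :: "nat \<Rightarrow> nat \<Rightarrow> nat" where "dd t t' = (if t \<le> t' then t' - t else t - t')"

lemma gp_le: "0 \<le> (r::real) \<Longrightarrow> r < 1 \<Longrightarrow> (\<Sum>i<n. r^i) \<le> 1/(1-r)"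
  by (simp add: sum_gp_strict divide_right_mono)

lemma geo:
  fixes r :: real
  assumes r: "0 \<le> r" "r < 1" and T: "finite T"
  shows "(\<Sum>t'\<in>T. r ^ dd t t') \<le> 2/(1-r)"
proof -
  obtain L where "T \<subseteq> {..<L}" using finite_nat_bounded[OF T] by blast
  then have L: "T \<subseteq> {..<t+L}" by auto
  have sub: "T \<subseteq> {..<t} \<union> {t..<t+L}" using L by auto
  have "(\<Sum>t'\<in>T. r ^ dd t t') \<le> (\<Sum>t'\<in>{..<t} \<union> {t..<t+L}. r ^ dd t t')"
    using sub r by (intro sum_mono2) auto
  also have "\<dots> = (\<Sum>t'\<in>{..<t}. r ^ dd t t') + (\<Sum>t'\<in>{t..<t+L}. r ^ dd t t')"
    by (intro sum.union_disjoint) auto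
  also have "(\<Sum>t'\<in>{..<t}. r ^ dd t t') = (\<Sum>i<t. r ^ Suc i)"
  proof -
    have "(\<Sum>t'\<in>{..<t}. r ^ dd t t') = (\<Sum>i<t. r ^ dd t (t - Suc i))"
      by (rule sum.nat_diff_reindex[symmetric])
    also have "\<dots> = (\<Sum>i<t. r ^ Suc i)"
      by (intro sum.cong refl) (auto simp: dd_def)
    finally show ?thesis .
  qed
  also have "(\<Sum>t'\<in>{t..<t+L}. r ^ dd t t') = (\<Sum>i<L. r ^ i)"
  proof -
    have "(\<Sum>t'\<in>{0+t..<L+t}. r ^ dd t t') = (\<Sum>i\<in>{0..<L}. r ^ dd t (i+t))"
      by (rule sum.shift_bounds_nat_ivl)
    also have "\<dots> = (\<Sum>i<L. r ^ i)" by (simp add: dd_def atLeast0LessThan)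
    finally show ?thesis by (simp add: add.commute)
  qed
  also have "(\<Sum>i<t. r ^ Suc i) \<le> (\<Sum>i<t. r ^ i)"
    using r by (intro sum_mono) (simp add: mult_left_le_one_le)
  finally have "(\<Sum>t'\<in>T. r ^ dd t t') \<le> (\<Sum>i<t. r ^ i) + (\<Sum>i<L. r ^ i)" by simp
  also have "\<dots> \<le> 1/(1-r) + 1/(1-r)" by (intro add_mono gp_le r)
  finally show ?thesis by simp
qed

lemma (in prob_space) indep_var_from_set:
  fixes X :: "'a \<Rightarrow> real" and Y :: "'a \<Rightarrow> real"
  assumes I: "indep_set (sigma_sets (space M) GA) (sigma_sets (space M) GB)"
    and X: "X \<in> borel_measurable M" and Y: "Y \<in> borel_measurable M"
    and gX: "{X -` A \<inter> space M | A. A \<in> sets borel} \<subseteq> sigma_sets (space M) GA"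
    and gY: "{Y -` A \<inter> space M | A. A \<in> sets borel} \<subseteq> sigma_sets (space M) GB"
  shows "indep_var borel X borel Y"
  unfolding indep_var_eq
proof (intro conjI)
  show "random_variable borel X" "random_variable borel Y" using X Y by auto
  have "indep_sets (case_bool (sigma_sets (space M) GA) (sigma_sets (space M) GB)) UNIV"
    using I unfolding indep_set_def .
  then show "indep_set (sigma_sets (space M) {X -` A \<inter> space M |A. A \<in> sets borel})
     (sigma_sets (space M) {Y -` A \<inter> space M |A. A \<in> sets borel})"
    unfolding indep_set_def
    by (rule indep_sets_mono_sets) (use sigma_sets_mono[OF gX] sigma_sets_mono[OF gY] in \<open>auto split: bool.split\<close>)
qed

context setting begin

lemma cov_bound:
  fixes X0 :: "real^'m^('s + 'f)"
  assumes D: "spec_norm (blockD Wb) < 1"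
  shows "\<bar>integral\<^sup>L M (\<lambda>\<omega>. inner (ee X0 t \<omega>) (ee X0 t' \<omega>))\<bar>
     \<le> spec_norm (blockD Wb) ^ dd t t' * (real CARD('s+'f) * real CARD('m) * bE X0)\<^sup>2"
proof -
  let ?K = "real CARD('s+'f) * real CARD('m) * bE X0"
  let ?r = "spec_norm (blockD Wb)"
  have r0: "0 \<le> ?r" unfolding spec_norm_def by (intro onorm_pos_le) simp
  have K0: "0 \<le> ?K" using bE_nn[of X0] by simp
  have main: "\<bar>integral\<^sup>L M (\<lambda>\<omega>. inner (ee X0 t \<omega>) (ee X0 (t+k) \<omega>))\<bar> \<le> ?r ^ k * ?K\<^sup>2" for t k
  proof -
    have nK: "norm (ee X0 t \<omega>) \<le> ?K" if "\<omega> \<in> space M" for \<omega>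
      by (intro rs_norm_bound ee_bound that)
    have bm: "\<bar>(mp Wb k ** ee X0 t \<omega>) $ i $ j\<bar> \<le> bE X0" if "\<omega> \<in> space M" for \<omega> i j
      by (intro rs_apply_bound2 mp_rs Wb_rs ee_bound that)
    have "\<bar>integral\<^sup>L M (\<lambda>\<omega>. inner (ee X0 t \<omega>) (mp Wb k ** ee X0 t \<omega>))\<bar> \<le> ?r ^ k * ?K\<^sup>2"
    proof (rule abs_int_le[OF prob_space_axioms])
      show "integrable M (\<lambda>\<omega>. inner (ee X0 t \<omega>) (mp Wb k ** ee X0 t \<omega>))"
        by (rule int_inner[OF _ _ ee_bound bm]) auto
      fix \<omega> assume \<omega>: "\<omega> \<in> space M"
      have c: "norm (mp Wb k ** ee X0 t \<omega>) \<le> ?r ^ k * norm (ee X0 t \<omega>)"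
        using contraction_mp[OF Wb_sb, of "ee X0 t \<omega>" k] ee_Inl[OF \<omega>] by blast
      have "\<bar>inner (ee X0 t \<omega>) (mp Wb k ** ee X0 t \<omega>)\<bar> \<le> norm (ee X0 t \<omega>) * norm (mp Wb k ** ee X0 t \<omega>)"
        by (rule Cauchy_Schwarz_ineq2)
      also have "\<dots> \<le> ?K * (?r ^ k * ?K)"
        by (intro mult_mono nK \<omega> order_trans[OF c] mult_left_mono) (use r0 K0 in auto)
      finally show "\<bar>inner (ee X0 t \<omega>) (mp Wb k ** ee X0 t \<omega>)\<bar> \<le> ?r ^ k * ?K\<^sup>2"
        by (simp add: power2_eq_square mult_ac)
    qed
    moreover have "integral\<^sup>L M (\<lambda>\<omega>. inner (ee X0 t \<omega>) (ee X0 (t+k) \<omega>))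
       = integral\<^sup>L M (\<lambda>\<omega>. inner (ee X0 t \<omega>) (mp Wb k ** ee X0 t \<omega>))" by (rule cov[OF D])
    ultimately show ?thesis by simp
  qed
  show ?thesis
  proof (cases "t \<le> t'")
    case True
    then show ?thesis using main[of t "t' - t"] by (simp add: dd_def)
  next
    case False
    have "\<bar>integral\<^sup>L M (\<lambda>\<omega>. inner (ee X0 t' \<omega>) (ee X0 (t' + (t - t')) \<omega>))\<bar> \<le> ?r ^ (t - t') * ?K\<^sup>2"
      by (rule main)
    then show ?thesis using False by (simp add: dd_def inner_commute)
  qed
qed

end



lemma integrable_vec:
  fixes f :: "'a \<Rightarrow> 'b::euclidean_space^'n"
  assumes f: "f \<in> borel_measurable M" and i: "\<And>i. integrable M (\<lambda>x. f x $ i)"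
  shows "integrable M f"
proof -
  have i1: "integrable M (\<lambda>x. \<Sum>i\<in>UNIV. norm (f x $ i))"
    using i by (intro Bochner_Integration.integrable_sum integrable_norm) auto
  have ae: "AE x in M. norm (f x) \<le> norm (\<Sum>i\<in>UNIV. norm (f x $ i))"
  proof (intro AE_I2)
    fix x
    have "norm (f x) \<le> (\<Sum>i\<in>UNIV. norm (f x $ i))" by (simp add: norm_vec_def L2_set_le_sum)
    also have "\<dots> \<le> norm (\<Sum>i\<in>UNIV. norm (f x $ i))" by simp
    finally show "norm (f x) \<le> norm (\<Sum>i\<in>UNIV. norm (f x $ i))" .
  qed
  show ?thesis by (rule Bochner_Integration.integrable_bound[OF i1 f ae])
qed

theorem theorem2:
  fixes M :: "'a measure"
    and W :: "nat \<Rightarrow> 'a \<Rightarrow> real^('s::finite + 'f::finite)^('s + 'f)"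
    and Nz :: "nat \<Rightarrow> 'a \<Rightarrow> real^('m::finite)^('s + 'f)"
    and X0 :: "real^'m^('s + 'f)"
    and \<sigma> :: real
  assumes P: "prob_space M"
    and W_meas: "\<And>t. W t \<in> borel_measurable M"
    and W_indep: "prob_space.indep_vars M (\<lambda>_. borel) W UNIV"
    and W_ident: "\<And>t. distr M borel (W t) = distr M borel (W 0)"
    and W_stoch: "\<And>t \<omega>. \<omega> \<in> space M \<Longrightarrow> row_stochastic (W t \<omega>)"
    and W_block: "\<And>t \<omega>. \<omega> \<in> space M \<Longrightarrow> stubborn_block (W t \<omega>)"
    and D_lt1: "spec_norm (blockD (integral\<^sup>L M (W 0))) < 1"
    and D_eq: "\<And>t. spec_norm (blockD (integral\<^sup>L M (W 0)))
                    = integral\<^sup>L M (\<lambda>\<omega>. spec_norm (blockD (W t \<omega>)))"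
    and N_meas: "\<And>t. Nz t \<in> borel_measurable M"
    and N_indep: "prob_space.indep_vars M (\<lambda>_. borel) (\<lambda>(t, i, j) \<omega>. Nz t \<omega> $ i $ j) UNIV"
    and N_ident: "\<And>t i j t' i' j'. distr M borel (\<lambda>\<omega>. Nz t \<omega> $ i $ j)
                                    = distr M borel (\<lambda>\<omega>. Nz t' \<omega> $ i' $ j')"
    and N_sq_int: "\<And>t i j. integrable M (\<lambda>\<omega>. (Nz t \<omega> $ i $ j)\<^sup>2)"
    and N_mean: "\<And>t i j. integral\<^sup>L M (\<lambda>\<omega>. Nz t \<omega> $ i $ j) = 0"
    and N_var: "\<And>t i j. integral\<^sup>L M (\<lambda>\<omega>. (Nz t \<omega> $ i $ j - integral\<^sup>L M (\<lambda>\<omega>. Nz t \<omega> $ i $ j))\<^sup>2) \<le> \<sigma>\<^sup>2"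
    and WN_indep: "prob_space.indep_set M
       (sigma_sets (space M) {(\<lambda>\<omega> t. W t \<omega>) -` A \<inter> space M | A. A \<in> sets (Pi\<^sub>M UNIV (\<lambda>_::nat. borel))})
       (sigma_sets (space M) {(\<lambda>\<omega> (t, i, j). Nz t \<omega> $ i $ j) -` A \<inter> space M
                               | A. A \<in> sets (Pi\<^sub>M UNIV (\<lambda>_::nat \<times> ('s + 'f) \<times> 'm. borel))})"
  shows "(\<forall>\<epsilon>>0. \<exists>To. \<forall>T. finite T \<and> T \<noteq> {} \<and> T \<subseteq> {To..} \<longrightarrow>
            norm (integral\<^sup>L M (estimator W X0 Nz T) - Winf (integral\<^sup>L M (W 0)) ** X0) < \<epsilon>)
       \<and> (\<forall>\<epsilon>>0. \<exists>To N. \<forall>T. finite T \<and> T \<subseteq> {To..} \<and> N \<le> card T \<longrightarrow>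
            integral\<^sup>L M (\<lambda>\<omega>. (norm (estimator W X0 Nz T \<omega> - Winf (integral\<^sup>L M (W 0)) ** X0))\<^sup>2) < \<epsilon>)"
proof -
  interpret prob_space M by (rule P)
  interpret S: setting M W
    using P W_meas W_indep W_ident W_stoch W_block by (simp add: setting_def setting_axioms_def)
  define r where "r = spec_norm (blockD S.Wb)"
  have Wb: "integral\<^sup>L M (W 0) = S.Wb" by (simp add: S.Wb_def)
  have D: "spec_norm (blockD S.Wb) < 1" using D_lt1 by (simp add: Wb)
  have r1: "r < 1" using D by (simp add: r_def)
  have r0: "0 \<le> r" unfolding r_def spec_norm_def by (intro onorm_pos_le) simp
  have c: "Winf (integral\<^sup>L M (W 0)) ** X0 = S.cc X0" by (simp add: S.cc_def Wb)
  have est: "estimator W X0 Nz T = (\<lambda>\<omega>. (1 / real (card T)) *\<^sub>R (\<Sum>t\<in>T. S.xx X0 t \<omega> + Nz t \<omega>))" for T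
    by (simp add: fun_eq_iff estimator_def S.xx_def opinion_pm)
  have nm[measurable]: "(\<lambda>\<omega>. Nz t \<omega> $ i $ j) \<in> borel_measurable M" for t i j
    using N_meas[of t] by measurable
  have ni: "integrable M (\<lambda>\<omega>. Nz t \<omega> $ i $ j)" for t i j
    by (rule square_integrable_imp_integrable[OF nm N_sq_int])
  have n2: "integral\<^sup>L M (\<lambda>\<omega>. (Nz t \<omega> $ i $ j)\<^sup>2) \<le> \<sigma>\<^sup>2" for t i j
    using N_var[of t i j] by (simp add: N_mean)
  have Nint: "integrable M (Nz t)" for t
    by (intro integrable_vec N_meas meas_nth ni)
  have EN: "integral\<^sup>L M (Nz t) = 0" for t
  proof -
    have "integral\<^sup>L M (Nz t) $ i $ j = 0" for i j
      using int_nth[OF Nint, of t i] int_nth[OF integrable_nth[OF Nint], of t i j] N_mean[of t i j] by simp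
    then show ?thesis by (simp add: vec_eq_iff)
  qed
  have xeint: "integrable M (\<lambda>\<omega>. S.xx X0 t \<omega> $ i $ j)" for t i j
    by (rule S.int_entry_bounded[where b="S.bX X0"]) (auto intro: S.xx_bound)
  have xint: "integrable M (S.xx X0 t)" for t
    by (intro integrable_vec S.xx_meas meas_nth xeint)
  have Exx: "integral\<^sup>L M (S.xx X0 t) = mp S.Wb t ** X0" for t
  proof -
    have "integral\<^sup>L M (S.xx X0 t) $ i $ j = (mp S.Wb t ** X0) $ i $ j" for i j
    proof -
      have "integral\<^sup>L M (S.xx X0 t) $ i $ j = integral\<^sup>L M (\<lambda>\<omega>. S.xx X0 t \<omega> $ i $ j)"
        using int_nth[OF xint, of t i] int_nth[OF integrable_nth[OF xint], of t i j] by simp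
      also have "\<dots> = integral\<^sup>L M (\<lambda>\<omega>. \<Sum>k\<in>UNIV. pm (\<lambda>i. W i \<omega>) 0 t $ i $ k * X0 $ k $ j)"
        by (simp add: S.xx_def matrix_matrix_mult_def)
      also have "\<dots> = (\<Sum>k\<in>UNIV. integral\<^sup>L M (\<lambda>\<omega>. pm (\<lambda>i. W i \<omega>) 0 t $ i $ k * X0 $ k $ j))"
        by (rule Bochner_Integration.integral_sum) (intro integrable_mult_left S.pm_entry_int)
      also have "\<dots> = (mp S.Wb t ** X0) $ i $ j"
        by (simp add: S.E_pm matrix_matrix_mult_def)
      finally show ?thesis .
    qed
    then show ?thesis by (simp add: vec_eq_iff)
  qed
  have part1: "\<forall>\<epsilon>>0. \<exists>To. \<forall>T. finite T \<and> T \<noteq> {} \<and> T \<subseteq> {To..} \<longrightarrow>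
            norm (integral\<^sup>L M (estimator W X0 Nz T) - Winf (integral\<^sup>L M (W 0)) ** X0) < \<epsilon>"
  proof (intro allI impI)
    fix \<epsilon> :: real assume \<epsilon>: "\<epsilon> > 0"
    define e0 where "e0 = X0 - S.cc X0"
    have e0z: "\<And>a. e0 $ Inl a = 0" by (simp add: e0_def S.cc_Inl)
    have "(\<lambda>n. r ^ n) \<longlonglongrightarrow> 0" using r0 r1 by (intro LIMSEQ_power_zero) simp
    moreover have "\<epsilon> / (norm e0 + 1) > 0" using \<epsilon> by (simp add: add_nonneg_pos)
    ultimately have "eventually (\<lambda>n. r ^ n < \<epsilon> / (norm e0 + 1)) sequentially"
      by (rule order_tendstoD(2))
    then obtain To where To: "r ^ To < \<epsilon> / (norm e0 + 1)" by (auto simp: eventually_sequentially)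
    show "\<exists>To. \<forall>T. finite T \<and> T \<noteq> {} \<and> T \<subseteq> {To..} \<longrightarrow>
            norm (integral\<^sup>L M (estimator W X0 Nz T) - Winf (integral\<^sup>L M (W 0)) ** X0) < \<epsilon>"
    proof (intro exI allI impI)
      fix T assume T: "finite T \<and> T \<noteq> {} \<and> T \<subseteq> {To..}"
      define N where "N = real (card T)"
      have N0: "N > 0" using T by (simp add: N_def card_gt_0_iff)
      have E: "integral\<^sup>L M (estimator W X0 Nz T) = (1/N) *\<^sub>R (\<Sum>t\<in>T. mp S.Wb t ** X0)"
      proof -
        have "integral\<^sup>L M (estimator W X0 Nz T) = (1/N) *\<^sub>R integral\<^sup>L M (\<lambda>\<omega>. \<Sum>t\<in>T. S.xx X0 t \<omega> + Nz t \<omega>)"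
          by (simp add: est N_def)
        also have "integral\<^sup>L M (\<lambda>\<omega>. \<Sum>t\<in>T. S.xx X0 t \<omega> + Nz t \<omega>) = (\<Sum>t\<in>T. integral\<^sup>L M (\<lambda>\<omega>. S.xx X0 t \<omega> + Nz t \<omega>))"
          by (rule Bochner_Integration.integral_sum) (intro Bochner_Integration.integrable_add xint Nint)
        also have "\<dots> = (\<Sum>t\<in>T. mp S.Wb t ** X0)"
          by (intro sum.cong refl) (simp add: Bochner_Integration.integral_add[OF xint Nint] Exx EN)
        finally show ?thesis .
      qed
      have cN: "(1/N) *\<^sub>R (\<Sum>t\<in>T. S.cc X0) = S.cc X0" using N0 by (simp add: N_def sum_constant_scaleR del: sum_constant)
      have diff: "integral\<^sup>L M (estimator W X0 Nz T) - Winf (integral\<^sup>L M (W 0)) ** X0 = (1/N) *\<^sub>R (\<Sum>t\<in>T. mp S.Wb t ** e0)"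
      proof -
        have "integral\<^sup>L M (estimator W X0 Nz T) - Winf (integral\<^sup>L M (W 0)) ** X0
            = (1/N) *\<^sub>R (\<Sum>t\<in>T. mp S.Wb t ** X0) - (1/N) *\<^sub>R (\<Sum>t\<in>T. S.cc X0)"
          by (simp only: E c cN)
        also have "\<dots> = (1/N) *\<^sub>R (\<Sum>t\<in>T. mp S.Wb t ** X0 - S.cc X0)"
          by (simp add: scaleR_diff_right sum_subtractf)
        also have "\<dots> = (1/N) *\<^sub>R (\<Sum>t\<in>T. mp S.Wb t ** e0)"
          by (simp add: e0_def mm_diff_l S.mp_cc[OF D])
        finally show ?thesis .
      qed
      have bt: "norm (mp S.Wb t ** e0) \<le> r ^ To * norm e0" if "t \<in> T" for t
      proof -
        have "norm (mp S.Wb t ** e0) \<le> r ^ t * norm e0"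
          using contraction_mp[OF S.Wb_sb e0z, of t] by (simp add: r_def)
        also have "\<dots> \<le> r ^ To * norm e0"
          using T that r0 r1 by (intro mult_right_mono power_decreasing) auto
        finally show ?thesis .
      qed
      have "norm ((1/N) *\<^sub>R (\<Sum>t\<in>T. mp S.Wb t ** e0)) = (1/N) * norm (\<Sum>t\<in>T. mp S.Wb t ** e0)"
        using N0 by simp
      also have "\<dots> \<le> (1/N) * (\<Sum>t\<in>T. norm (mp S.Wb t ** e0))"
        using N0 by (intro mult_left_mono norm_sum) auto
      also have "\<dots> \<le> (1/N) * (\<Sum>t\<in>T. r ^ To * norm e0)"
        using N0 by (intro mult_left_mono sum_mono bt) auto
      also have "\<dots> = r ^ To * norm e0" using N0 by (simp add: N_def)
      also have "\<dots> \<le> r ^ To * (norm e0 + 1)" using r0 by (intro mult_left_mono) auto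
      also have "\<dots> < \<epsilon>" using To by (simp add: pos_less_divide_eq add_nonneg_pos)
      finally show "norm (integral\<^sup>L M (estimator W X0 Nz T) - Winf (integral\<^sup>L M (W 0)) ** X0) < \<epsilon>"
        unfolding diff .
    qed
  qed
  have part2: "\<forall>\<epsilon>>0. \<exists>To N. \<forall>T. finite T \<and> T \<subseteq> {To..} \<and> N \<le> card T \<longrightarrow>
            integral\<^sup>L M (\<lambda>\<omega>. (norm (estimator W X0 Nz T \<omega> - Winf (integral\<^sup>L M (W 0)) ** X0))\<^sup>2) < \<epsilon>"
  proof -
    define Z where "Z t \<omega> = S.ee X0 t \<omega> + Nz t \<omega>" for t \<omega>
    define K where "K = real CARD('s+'f) * real CARD('m) * S.bE X0"
    define CN where "CN = real CARD('s+'f) * real CARD('m)"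
    have CN0: "0 \<le> CN" by (simp add: CN_def)
    \<comment> \<open>independence of the opinion process and the noise\<close>
    have cross: "integral\<^sup>L M (\<lambda>\<omega>. S.ee X0 t \<omega> $ i $ j * Nz t' \<omega> $ i $ j) = 0
       \<and> integrable M (\<lambda>\<omega>. S.ee X0 t \<omega> $ i $ j * Nz t' \<omega> $ i $ j)" for t t' i j
    proof -
      let ?GA = "{(\<lambda>\<omega> t. W t \<omega>) -` A \<inter> space M | A. A \<in> sets (Pi\<^sub>M UNIV (\<lambda>_::nat. borel))}"
      let ?GB = "{(\<lambda>\<omega> (t, i, j). Nz t \<omega> $ i $ j) -` A \<inter> space M
                               | A. A \<in> sets (Pi\<^sub>M UNIV (\<lambda>_::nat \<times> ('s + 'f) \<times> 'm. borel))}"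
      define Phi where "Phi h = (pm h 0 t ** X0 - S.cc X0) $ i $ j" for h :: "nat \<Rightarrow> real^('s + 'f)^('s + 'f)"
      define Psi where "Psi g = g (t', i, j)" for g :: "nat \<times> ('s + 'f) \<times> 'm \<Rightarrow> real"
      have mP[measurable]: "(\<lambda>h. pm h 0 t) \<in> borel_measurable (Pi\<^sub>M UNIV (\<lambda>_::nat. borel :: (real^('s + 'f)^('s + 'f)) measure))"
        by (rule S.pm_meas_Pi) auto
      have mPhi: "Phi \<in> borel_measurable (Pi\<^sub>M UNIV (\<lambda>_::nat. borel))" unfolding Phi_def by measurable
      have mPsi: "Psi \<in> borel_measurable (Pi\<^sub>M UNIV (\<lambda>_::nat \<times> ('s + 'f) \<times> 'm. borel))"
        unfolding Psi_def by (rule measurable_component_singleton) auto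
      have eX: "S.ee X0 t \<omega> $ i $ j = Phi (\<lambda>t. W t \<omega>)" for \<omega>
        by (simp add: Phi_def S.ee_def S.xx_def)
      have eY: "Nz t' \<omega> $ i $ j = Psi (\<lambda>(t, i, j). Nz t \<omega> $ i $ j)" for \<omega>
        by (simp add: Psi_def)
      have gX: "{(\<lambda>\<omega>. S.ee X0 t \<omega> $ i $ j) -` A \<inter> space M | A. A \<in> sets borel} \<subseteq> sigma_sets (space M) ?GA"
      proof (intro subsetI, elim CollectE exE conjE)
        fix x A assume x: "x = (\<lambda>\<omega>. S.ee X0 t \<omega> $ i $ j) -` A \<inter> space M" and A: "A \<in> sets borel"
        have "x = (\<lambda>\<omega> t. W t \<omega>) -` (Phi -` A \<inter> space (Pi\<^sub>M UNIV (\<lambda>_::nat. borel))) \<inter> space M"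
          unfolding x eX by (auto simp: space_PiM)
        moreover have "Phi -` A \<inter> space (Pi\<^sub>M UNIV (\<lambda>_::nat. borel)) \<in> sets (Pi\<^sub>M UNIV (\<lambda>_::nat. borel))"
          using mPhi A by (rule measurable_sets)
        ultimately show "x \<in> sigma_sets (space M) ?GA" by (intro sigma_sets.Basic) blast
      qed
      have gY: "{(\<lambda>\<omega>. Nz t' \<omega> $ i $ j) -` A \<inter> space M | A. A \<in> sets borel} \<subseteq> sigma_sets (space M) ?GB"
      proof (intro subsetI, elim CollectE exE conjE)
        fix x A assume x: "x = (\<lambda>\<omega>. Nz t' \<omega> $ i $ j) -` A \<inter> space M" and A: "A \<in> sets borel"
        have "x = (\<lambda>\<omega> (t, i, j). Nz t \<omega> $ i $ j) -` (Psi -` A \<inter> space (Pi\<^sub>M UNIV (\<lambda>_::nat \<times> ('s + 'f) \<times> 'm. borel))) \<inter> space M"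
          unfolding x by (auto simp: space_PiM Psi_def)
        moreover have "Psi -` A \<inter> space (Pi\<^sub>M UNIV (\<lambda>_::nat \<times> ('s + 'f) \<times> 'm. borel)) \<in> sets (Pi\<^sub>M UNIV (\<lambda>_::nat \<times> ('s + 'f) \<times> 'm. borel))"
          using mPsi A by (rule measurable_sets)
        ultimately show "x \<in> sigma_sets (space M) ?GB" by (intro sigma_sets.Basic) blast
      qed
      have I: "indep_var borel (\<lambda>\<omega>. S.ee X0 t \<omega> $ i $ j) borel (\<lambda>\<omega>. Nz t' \<omega> $ i $ j)"
        by (rule indep_var_from_set[OF WN_indep _ _ gX gY]) auto
      have ie: "integrable M (\<lambda>\<omega>. S.ee X0 t \<omega> $ i $ j)"
        by (rule S.int_entry_bounded[where b="S.bE X0"]) (auto intro: S.ee_bound)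
      show ?thesis
        using indep_var_lebesgue_integral[OF I ie ni] indep_var_integrable[OF I ie ni] N_mean by simp
    qed
    have nn: "integral\<^sup>L M (\<lambda>\<omega>. Nz t \<omega> $ i $ j * Nz t' \<omega> $ i $ j) = 0
       \<and> integrable M (\<lambda>\<omega>. Nz t \<omega> $ i $ j * Nz t' \<omega> $ i $ j)" if tt: "t \<noteq> t'" for t t' i j
    proof -
      let ?X = "\<lambda>(t, i, j) \<omega>. Nz t \<omega> $ i $ j"
      have I: "indep_vars (\<lambda>_. borel) ?X {(t, i, j), (t', i, j)}"
        by (rule indep_vars_subset[OF N_indep]) auto
      have iX: "p \<in> {(t, i, j), (t', i, j)} \<Longrightarrow> integrable M (?X p)" for p using ni by auto
      have pr: "(\<Prod>p\<in>{(t, i, j), (t', i, j)}. ?X p \<omega>) = Nz t \<omega> $ i $ j * Nz t' \<omega> $ i $ j" for \<omega>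
        using tt by simp
      have "(\<Prod>p\<in>{(t, i, j), (t', i, j)}. integral\<^sup>L M (?X p)) = 0"
        using tt N_mean by simp
      then show ?thesis
        using indep_vars_lebesgue_integral[OF _ I iX] indep_vars_integrable[OF _ I iX] unfolding pr by simp
    qed
    have ee_int: "integrable M (\<lambda>\<omega>. inner (S.ee X0 t \<omega>) (S.ee X0 t' \<omega>))" for t t'
      by (rule S.int_inner[OF _ _ S.ee_bound S.ee_bound]) auto
    have fdec: "inner (Z t \<omega>) (Z t' \<omega>) = inner (S.ee X0 t \<omega>) (S.ee X0 t' \<omega>)
        + (\<Sum>i\<in>UNIV. \<Sum>j\<in>UNIV. S.ee X0 t \<omega> $ i $ j * Nz t' \<omega> $ i $ j)
        + (\<Sum>i\<in>UNIV. \<Sum>j\<in>UNIV. S.ee X0 t' \<omega> $ i $ j * Nz t \<omega> $ i $ j)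
        + (\<Sum>i\<in>UNIV. \<Sum>j\<in>UNIV. Nz t \<omega> $ i $ j * Nz t' \<omega> $ i $ j)" for t t' \<omega>
      unfolding Z_def inner_add_left inner_add_right
      by (simp add: inner_mat[of "Nz t \<omega>"] inner_mat[of "S.ee X0 t \<omega>" "Nz t' \<omega>"]
          inner_mat[of "Nz t \<omega>" "S.ee X0 t' \<omega>"] mult.commute)
    have nnint: "integrable M (\<lambda>\<omega>. Nz t \<omega> $ i $ j * Nz t' \<omega> $ i $ j)" for t t' i j
    proof (cases "t = t'")
      case True then show ?thesis using N_sq_int[of t i j] by (simp add: power2_eq_square)
    next
      case False then show ?thesis using nn by blast
    qed
    have nnE: "integral\<^sup>L M (\<lambda>\<omega>. \<Sum>i\<in>UNIV. \<Sum>j\<in>UNIV. Nz t \<omega> $ i $ j * Nz t' \<omega> $ i $ j)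
        \<le> (if t = t' then CN * \<sigma>\<^sup>2 else 0)" for t t'
    proof -
      have "integral\<^sup>L M (\<lambda>\<omega>. \<Sum>i\<in>UNIV. \<Sum>j\<in>UNIV. Nz t \<omega> $ i $ j * Nz t' \<omega> $ i $ j)
          = (\<Sum>i\<in>UNIV. \<Sum>j\<in>UNIV. integral\<^sup>L M (\<lambda>\<omega>. Nz t \<omega> $ i $ j * Nz t' \<omega> $ i $ j))"
        using nnint by (simp add: Bochner_Integration.integral_sum Bochner_Integration.integrable_sum)
      also have "\<dots> \<le> (\<Sum>i\<in>(UNIV::('s+'f) set). \<Sum>j\<in>(UNIV::'m set). if t = t' then \<sigma>\<^sup>2 else 0)"
      proof (intro sum_mono)
        fix i j
        show "integral\<^sup>L M (\<lambda>\<omega>. Nz t \<omega> $ i $ j * Nz t' \<omega> $ i $ j) \<le> (if t = t' then \<sigma>\<^sup>2 else 0)"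
        proof (cases "t = t'")
          case True then show ?thesis using n2[of t i j] by (simp add: power2_eq_square)
        next
          case False then show ?thesis using nn[OF False] by simp
        qed
      qed
      also have "\<dots> = (if t = t' then CN * \<sigma>\<^sup>2 else 0)" by (simp add: CN_def)
      finally show ?thesis .
    qed
    have fint: "integrable M (\<lambda>\<omega>. inner (Z t \<omega>) (Z t' \<omega>))" for t t'
      unfolding fdec using ee_int cross nnint
      by (intro Bochner_Integration.integrable_add Bochner_Integration.integrable_sum) auto
    have fE: "integral\<^sup>L M (\<lambda>\<omega>. inner (Z t \<omega>) (Z t' \<omega>)) \<le> r ^ dd t t' * K\<^sup>2 + (if t = t' then CN * \<sigma>\<^sup>2 else 0)" for t t'
    proof -
      have i2: "integrable M (\<lambda>\<omega>. \<Sum>i\<in>UNIV. \<Sum>j\<in>UNIV. S.ee X0 t \<omega> $ i $ j * Nz t' \<omega> $ i $ j)" for t t'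
        using cross by (intro Bochner_Integration.integrable_sum) auto
      have e2: "integral\<^sup>L M (\<lambda>\<omega>. \<Sum>i\<in>UNIV. \<Sum>j\<in>UNIV. S.ee X0 t \<omega> $ i $ j * Nz t' \<omega> $ i $ j) = 0" for t t'
        using cross by (simp add: Bochner_Integration.integral_sum Bochner_Integration.integrable_sum)
      have i4: "integrable M (\<lambda>\<omega>. \<Sum>i\<in>UNIV. \<Sum>j\<in>UNIV. Nz t \<omega> $ i $ j * Nz t' \<omega> $ i $ j)"
        using nnint by (intro Bochner_Integration.integrable_sum) auto
      have "integral\<^sup>L M (\<lambda>\<omega>. inner (Z t \<omega>) (Z t' \<omega>))
          = integral\<^sup>L M (\<lambda>\<omega>. inner (S.ee X0 t \<omega>) (S.ee X0 t' \<omega>))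
            + integral\<^sup>L M (\<lambda>\<omega>. \<Sum>i\<in>UNIV. \<Sum>j\<in>UNIV. Nz t \<omega> $ i $ j * Nz t' \<omega> $ i $ j)"
        unfolding fdec using ee_int i2 i4 by (simp add: e2)
      also have "\<dots> \<le> r ^ dd t t' * K\<^sup>2 + (if t = t' then CN * \<sigma>\<^sup>2 else 0)"
      proof (rule add_mono)
        show "integral\<^sup>L M (\<lambda>\<omega>. inner (S.ee X0 t \<omega>) (S.ee X0 t' \<omega>)) \<le> r ^ dd t t' * K\<^sup>2"
          using S.cov_bound[OF D, of X0 t t'] unfolding r_def K_def by simp
      qed (rule nnE)
      finally show ?thesis .
    qed
    define C where "C = K\<^sup>2 * (2 / (1 - r)) + CN * \<sigma>\<^sup>2"
    have C0: "0 \<le> C" unfolding C_def using r1 CN0 by (intro add_nonneg_nonneg mult_nonneg_nonneg) auto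
    show ?thesis
    proof (intro allI impI)
      fix \<epsilon> :: real assume \<epsilon>: "\<epsilon> > 0"
      define N0 where "N0 = nat \<lceil>C / \<epsilon>\<rceil> + 1"
      show "\<exists>To N. \<forall>T. finite T \<and> T \<subseteq> {To..} \<and> N \<le> card T \<longrightarrow>
            integral\<^sup>L M (\<lambda>\<omega>. (norm (estimator W X0 Nz T \<omega> - Winf (integral\<^sup>L M (W 0)) ** X0))\<^sup>2) < \<epsilon>"
      proof (intro exI allI impI)
        fix T :: "nat set" assume T: "finite T \<and> T \<subseteq> {0..} \<and> N0 \<le> card T"
        define N where "N = real (card T)"
        have NC: "C / \<epsilon> < N"
        proof -
          have "C / \<epsilon> \<le> real (nat \<lceil>C / \<epsilon>\<rceil>)" by linarith
          also have "\<dots> < real N0" by (simp add: N0_def)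
          also have "\<dots> \<le> N" using T by (simp add: N_def)
          finally show ?thesis .
        qed
        have N0': "N > 0" using NC C0 \<epsilon> by (smt (verit) divide_nonneg_pos)
        have pw: "(norm (estimator W X0 Nz T \<omega> - Winf (integral\<^sup>L M (W 0)) ** X0))\<^sup>2
            = (1/N)\<^sup>2 * (\<Sum>t\<in>T. \<Sum>t'\<in>T. inner (Z t \<omega>) (Z t' \<omega>))" for \<omega>
        proof -
          have cN: "(1/N) *\<^sub>R (\<Sum>t\<in>T. S.cc X0) = S.cc X0" using N0' by (simp add: N_def sum_constant_scaleR del: sum_constant)
          have "estimator W X0 Nz T \<omega> - Winf (integral\<^sup>L M (W 0)) ** X0
              = (1/N) *\<^sub>R (\<Sum>t\<in>T. S.xx X0 t \<omega> + Nz t \<omega>) - S.cc X0"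
            by (simp add: est c N_def)
          also have "\<dots> = (1/N) *\<^sub>R (\<Sum>t\<in>T. S.xx X0 t \<omega> + Nz t \<omega>) - (1/N) *\<^sub>R (\<Sum>t\<in>T. S.cc X0)"
            by (simp only: cN)
          also have "\<dots> = (1/N) *\<^sub>R ((\<Sum>t\<in>T. S.xx X0 t \<omega> + Nz t \<omega>) - (\<Sum>t\<in>T. S.cc X0))"
            by (rule scaleR_diff_right[symmetric])
          also have "\<dots> = (1/N) *\<^sub>R (\<Sum>t\<in>T. (S.xx X0 t \<omega> + Nz t \<omega>) - S.cc X0)"
            by (simp only: sum_subtractf)
          also have "\<dots> = (1/N) *\<^sub>R (\<Sum>t\<in>T. Z t \<omega>)"
            by (intro arg_cong[where f="\<lambda>v. (1/N) *\<^sub>R v"] sum.cong refl) (simp add: Z_def S.ee_def)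
          finally have e: "estimator W X0 Nz T \<omega> - Winf (integral\<^sup>L M (W 0)) ** X0 = (1/N) *\<^sub>R (\<Sum>t\<in>T. Z t \<omega>)" .
          show ?thesis unfolding e power2_norm_eq_inner
            by (simp add: inner_sum_left inner_sum_right sum_distrib_left power2_eq_square, rule sum.swap)
        qed
        have "integral\<^sup>L M (\<lambda>\<omega>. (norm (estimator W X0 Nz T \<omega> - Winf (integral\<^sup>L M (W 0)) ** X0))\<^sup>2)
            = (1/N)\<^sup>2 * (\<Sum>t\<in>T. \<Sum>t'\<in>T. integral\<^sup>L M (\<lambda>\<omega>. inner (Z t \<omega>) (Z t' \<omega>)))"
          unfolding pw using fint
          by (simp add: Bochner_Integration.integral_sum Bochner_Integration.integrable_sum)
        also have "\<dots> \<le> (1/N)\<^sup>2 * (\<Sum>t\<in>T. \<Sum>t'\<in>T. r ^ dd t t' * K\<^sup>2 + (if t = t' then CN * \<sigma>\<^sup>2 else 0))"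
          by (intro mult_left_mono sum_mono fE) auto
        also have "\<dots> \<le> (1/N)\<^sup>2 * (\<Sum>t\<in>T. C)"
        proof (rule mult_left_mono)
          have "(\<Sum>t\<in>T. \<Sum>t'\<in>T. r ^ dd t t' * K\<^sup>2 + (if t = t' then CN * \<sigma>\<^sup>2 else 0))
              = (\<Sum>t\<in>T. K\<^sup>2 * (\<Sum>t'\<in>T. r ^ dd t t') + CN * \<sigma>\<^sup>2)"
            using T by (simp add: sum.distrib sum_distrib_left mult.commute)
          also have "\<dots> \<le> (\<Sum>t\<in>T. C)"
            unfolding C_def
            by (intro sum_mono add_mono mult_left_mono geo r0 r1) (use T CN0 in auto)
          finally show "(\<Sum>t\<in>T. \<Sum>t'\<in>T. r ^ dd t t' * K\<^sup>2 + (if t = t' then CN * \<sigma>\<^sup>2 else 0)) \<le> (\<Sum>t\<in>T. C)" .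
        qed simp
        also have "(1/N)\<^sup>2 * (\<Sum>t\<in>T. C) = C / N" by (simp add: N_def power2_eq_square)
        also have "C / N < \<epsilon>" using NC N0' \<epsilon> by (simp add: divide_less_eq mult.commute pos_divide_less_eq)
        finally show "integral\<^sup>L M (\<lambda>\<omega>. (norm (estimator W X0 Nz T \<omega> - Winf (integral\<^sup>L M (W 0)) ** X0))\<^sup>2) < \<epsilon>" .
      qed
    qed
  qed
  show ?thesis using part1 part2 by blast
qed



end
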